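(* Let $d\ge1$ and $f\in\mathcal{S}(\mathbb{R}^d)$ with $f(x_0)\neq0$ for some $x_0\in\mathbb{R}^d$. Let $(\xi_x)_{x\in\mathbb{Z}^d}$ be i.i.d. $\mathbb{R}^d$-valued random variables that are not a.s. constant, and $T_r^0=\sum_{x\in\mathbb{Z}^d} f((x+\xi_x)/r)$. Let $h:(0,\infty)\to(0,\infty)$ satisfy $\lim_{r\to\infty}h(r)=0$. Then there exist $C>0$ and $r_0>0$ such that for all $r>r_0$, $\operatorname{Var}[T_r^0]\ge C r^{d-2}h(r)$.
   Context: $\mathcal{S}(\mathbb{R}^d)$ denotes the Schwartz space. *)

theory Defs
  imports "HOL-Probability.Probability"
begin

definition partial_coord :: "'n::finite \<Rightarrow> (real^'n \<Rightarrow> real) \<Rightarrow> real^'n \<Rightarrow> real" where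
  "partial_coord i g x = deriv (\<lambda>t. g (x + t *\<^sub>R axis i 1)) 0"

fun iter_partial :: "'n::finite list \<Rightarrow> (real^'n \<Rightarrow> real) \<Rightarrow> real^'n \<Rightarrow> real" where
  "iter_partial [] g = g"
| "iter_partial (i # is) g = partial_coord i (iter_partial is g)"

text \<open>Schwartz space S(R^d) (real-valued): all iterated partial derivatives exist and are
  (Frechet) differentiable everywhere, i.e. f is C^infinity, and every derivative decays
  faster than any polynomial.\<close>
definition schwartz :: "(real^'n::finite \<Rightarrow> real) \<Rightarrow> bool" where
  "schwartz f \<longleftrightarrow>
     (\<forall>is x. iter_partial is f differentiable (at x)) \<and>
     (\<forall>is (N::nat). \<exists>C. \<forall>x. (1 + norm x) ^ N * \<bar>iter_partial is f x\<bar> \<le> C)"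

definition lat :: "int^'n::finite \<Rightarrow> real^'n" where
  "lat x = (\<chi> i. real_of_int (x $ i))"

end

theory Submission
  imports Defs
begin


lemma sum_inv_sq_nat_aux: "N \<ge> 1 \<Longrightarrow> (\<Sum>n<N. 1/(real n+1)^2) \<le> 2 - 1/real N"
proof (induction N rule: nat_induct_at_least)
  case base then show ?case by simp
next
  case (Suc N)
  have "(\<Sum>n<Suc N. 1/(real n+1)^2) = (\<Sum>n<N. 1/(real n+1)^2) + 1/(real N+1)^2" by simp
  also have "\<dots> \<le> 2 - 1/real N + 1/(real N+1)^2" using Suc by simp
  also have "\<dots> \<le> 2 - 1/real (Suc N)"
  proof -
    have e: "1/real N - 1/(real N + 1) = 1/(real N * (real N + 1))"
      using Suc(1) by (simp add: field_simps)
    have "1/(real N+1)^2 \<le> 1/(real N * (real N + 1))"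
      using Suc(1) by (intro divide_left_mono) (auto simp: power2_eq_square)
    then have "1/(real N+1)^2 \<le> 1/real N - 1/(real N + 1)" using e by simp
    moreover have "1/real (Suc N) = 1/(real N + 1)" by simp
    ultimately show ?thesis by linarith
  qed
  finally show ?case .
qed

lemma sum_inv_sq_nat: "(\<Sum>n<N. 1/(real n+1)^2) \<le> 2"
proof (cases "N \<ge> 1")
  case True
  have "1/real N \<ge> 0" by simp
  then show ?thesis using sum_inv_sq_nat_aux[OF True] by linarith
qed (cases N, auto)

lemma sum_inv_sq_inj:
  assumes "finite A" "inj_on g A" "\<And>j. j \<in> A \<Longrightarrow> h j = 1/(real (g j)+1)^2"
  shows "sum h A \<le> 2"
proof -
  obtain N where N: "g ` A \<subseteq> {..<N}" using assms(1) finite_nat_iff_bounded by blast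
  have "sum h A = (\<Sum>n\<in>g ` A. 1/(real n+1)^2)"
    using assms by (simp add: sum.reindex)
  also have "\<dots> \<le> (\<Sum>n<N. 1/(real n+1)^2)"
    by (rule sum_mono2) (use N in auto)
  also have "\<dots> \<le> 2" by (rule sum_inv_sq_nat)
  finally show ?thesis .
qed

lemma sum_inv_sq_int:
  assumes "finite (J::int set)"
  shows "(\<Sum>j\<in>J. 1/(1+\<bar>real_of_int j\<bar>)^2) \<le> 4"
proof -
  let ?h = "\<lambda>j::int. 1/(1+\<bar>real_of_int j\<bar>)^2"
  have "J = {j\<in>J. j \<ge> 0} \<union> {j\<in>J. j < 0}" by auto
  then have "sum ?h J = sum ?h {j\<in>J. j \<ge> 0} + sum ?h {j\<in>J. j < 0}"
    using assms by (metis (no_types, lifting) finite_Un sum.union_disjoint disjoint_iff mem_Collect_eq not_le)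
  also have "sum ?h {j\<in>J. j \<ge> 0} \<le> 2"
    by (rule sum_inv_sq_inj[where g="\<lambda>j. nat j"]) (use assms in \<open>auto simp: inj_on_def\<close>)
  also have "sum ?h {j\<in>J. j < 0} \<le> 2"
    by (rule sum_inv_sq_inj[where g="\<lambda>j. nat (-j)"]) (use assms in \<open>auto simp: inj_on_def add.commute\<close>)
  finally show ?thesis by simp
qed

lemma oneD_bound:
  assumes "r > 0" "finite (K::int set)"
  shows "(\<Sum>k\<in>K. 1/(1+\<bar>real_of_int k + c\<bar>/r)^2) \<le> 16*(max 1 r)^2"
proof -
  define R where "R = max 1 r"
  define m where "m = \<lfloor>c\<rfloor>"
  have R: "R \<ge> 1" "R \<ge> r" by (auto simp: R_def)
  have tb: "1/(1+\<bar>real_of_int k + c\<bar>/r)^2 \<le> 4*R^2 * (1/(1+\<bar>real_of_int (k+m)\<bar>)^2)" for k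
  proof -
    have a0: "\<bar>real_of_int k + c\<bar> \<ge> 0" by simp
    have "1+\<bar>real_of_int k + c\<bar>/r \<ge> (1+\<bar>real_of_int k + c\<bar>)/R"
    proof -
      have "\<bar>real_of_int k + c\<bar>/R \<le> \<bar>real_of_int k + c\<bar>/r"
        using R assms(1) a0 by (intro divide_left_mono) auto
      moreover have "1/R \<le> 1" using R by simp
      ultimately show ?thesis by (simp add: add_divide_distrib)
    qed
    moreover have "1+\<bar>real_of_int (k+m)\<bar> \<le> 2*(1+\<bar>real_of_int k + c\<bar>)"
    proof -
      have "real_of_int m \<le> c" "c < real_of_int m + 1" unfolding m_def by linarith+
      moreover have "\<bar>real_of_int k + real_of_int m\<bar> \<le> \<bar>real_of_int k + c\<bar> + \<bar>real_of_int m - c\<bar>"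
        by (rule order_trans[OF _ abs_triangle_ineq]) simp
      moreover have "\<bar>real_of_int m - c\<bar> < 1" using calculation(1,2) by (simp add: abs_if)
      ultimately show ?thesis by (simp only: of_int_add) (smt (verit))
    qed
    ultimately have le: "(1+\<bar>real_of_int (k+m)\<bar>)/(2*R) \<le> 1+\<bar>real_of_int k + c\<bar>/r"
    proof -
      have "(1+\<bar>real_of_int (k+m)\<bar>)/(2*R) \<le> (2*(1+\<bar>real_of_int k + c\<bar>))/(2*R)"
        using R \<open>1+\<bar>real_of_int (k+m)\<bar> \<le> 2*(1+\<bar>real_of_int k + c\<bar>)\<close> by (intro divide_right_mono) auto
      also have "\<dots> = (1+\<bar>real_of_int k + c\<bar>)/R" using R by (simp add: field_simps)
      finally show ?thesis using \<open>1+\<bar>real_of_int k + c\<bar>/r \<ge> (1+\<bar>real_of_int k + c\<bar>)/R\<close> by linarith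
    qed
    have pos: "(1+\<bar>real_of_int (k+m)\<bar>)/(2*R) > 0" using R by simp
    have "1/(1+\<bar>real_of_int k + c\<bar>/r)^2 \<le> 1/((1+\<bar>real_of_int (k+m)\<bar>)/(2*R))^2"
      using le pos by (intro divide_left_mono power_mono mult_pos_pos) auto
    also have "\<dots> = 4*R^2 * (1/(1+\<bar>real_of_int (k+m)\<bar>)^2)"
      by (simp add: power_divide field_simps power2_eq_square)
    finally show ?thesis .
  qed
  have "(\<Sum>k\<in>K. 1/(1+\<bar>real_of_int k + c\<bar>/r)^2) \<le> (\<Sum>k\<in>K. 4*R^2 * (1/(1+\<bar>real_of_int (k+m)\<bar>)^2))"
    by (rule sum_mono) (rule tb)
  also have "\<dots> = 4*R^2 * (\<Sum>j\<in>(\<lambda>k. k+m) ` K. 1/(1+\<bar>real_of_int j\<bar>)^2)"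
    by (simp add: sum_distrib_left sum.reindex inj_on_def)
  also have "\<dots> \<le> 4*R^2 * 4"
    by (intro mult_left_mono sum_inv_sq_int) (use assms in auto)
  finally show ?thesis by (simp add: R_def)
qed



lemma schwartz_decay:
  assumes "schwartz f"
  obtains C where "\<And>x. (1 + norm x) ^ N * \<bar>f x\<bar> \<le> C"
  using assms unfolding schwartz_def
  by (metis iter_partial.simps(1))

lemma lat_nth[simp]: "lat x $ i = real_of_int (x $ i)"
  by (simp add: lat_def)

lemma lattice_bound:
  fixes f :: "real^'n::finite \<Rightarrow> real"
  assumes "schwartz f" "r > 0"
  shows "\<exists>L. \<forall>y (F::(int^'n) set). finite F \<longrightarrow> (\<Sum>x\<in>F. \<bar>f ((1/r) *\<^sub>R (lat x + y))\<bar>) \<le> L"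
proof -
  obtain C where C: "\<And>x. (1 + norm x) ^ (2*CARD('n)) * \<bar>f x\<bar> \<le> C"
    using schwartz_decay[OF assms(1)] by blast
  have C0: "C \<ge> 0" using C[of 0] by (smt (verit) mult_nonneg_nonneg zero_le_power abs_ge_zero norm_ge_zero)
  have fb: "\<bar>f z\<bar> \<le> C * (\<Prod>i\<in>UNIV. 1/(1+\<bar>z$i\<bar>)^2)" for z
  proof -
    have "(\<Prod>i\<in>UNIV. (1+\<bar>z$i\<bar>)^2) \<le> (\<Prod>i\<in>(UNIV::'n set). (1+norm z)^2)"
      by (intro prod_mono conjI power_mono) (auto simp: component_le_norm_cart)
    also have "\<dots> = (1 + norm z) ^ (2*CARD('n))"
      by (simp add: prod_constant power_mult)
    finally have le: "(\<Prod>i\<in>UNIV. (1+\<bar>z$i\<bar>)^2) * \<bar>f z\<bar> \<le> C"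
      using C[of z] by (meson abs_ge_zero mult_right_mono order_trans)
    have pos: "(\<Prod>i\<in>UNIV. (1+\<bar>z$i\<bar>)^2) > 0" by (intro prod_pos) (auto simp: add_pos_nonneg)
    have "\<bar>f z\<bar> \<le> C / (\<Prod>i\<in>UNIV. (1+\<bar>z$i\<bar>)^2)"
      using le pos by (simp add: field_simps mult.commute)
    also have "\<dots> = C * (\<Prod>i\<in>UNIV. 1/(1+\<bar>z$i\<bar>)^2)"
      by (simp add: prod_dividef)
    finally show ?thesis .
  qed
  define B where "B = 16*(max 1 r)^2"
  have B0: "B \<ge> 0" by (simp add: B_def)
  show ?thesis
  proof (intro exI allI impI)
    fix y :: "real^'n" and F :: "(int^'n) set"
    assume F: "finite F"
    define \<psi> where "\<psi> i k = 1/(1+\<bar>real_of_int k + y$i\<bar>/r)^2" for i k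
    have \<psi>0: "\<psi> i k \<ge> 0" for i k by (simp add: \<psi>_def)
    have tm: "\<bar>f ((1/r) *\<^sub>R (lat x + y))\<bar> \<le> C * (\<Prod>i\<in>UNIV. \<psi> i (x$i))" for x
    proof -
      have "\<bar>((1/r) *\<^sub>R (lat x + y)) $ i\<bar> = \<bar>real_of_int (x$i) + y$i\<bar>/r" for i
        using assms(2) by (simp add: abs_mult)
      then show ?thesis using fb[of "(1/r) *\<^sub>R (lat x + y)"] assms(2) by (simp add: \<psi>_def)
    qed
    have "(\<Sum>x\<in>F. \<bar>f ((1/r) *\<^sub>R (lat x + y))\<bar>) \<le> (\<Sum>x\<in>F. C * (\<Prod>i\<in>UNIV. \<psi> i (x$i)))"
      by (rule sum_mono) (rule tm)
    also have "\<dots> = C * (\<Sum>x\<in>F. (\<Prod>i\<in>UNIV. \<psi> i (x$i)))" by (simp add: sum_distrib_left)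
    also have "(\<Sum>x\<in>F. (\<Prod>i\<in>UNIV. \<psi> i (x$i))) = (\<Sum>g\<in>vec_nth ` F. (\<Prod>i\<in>UNIV. \<psi> i (g i)))"
      by (subst sum.reindex) (auto simp: inj_on_def vec_eq_iff)
    also have "\<dots> \<le> (\<Sum>g\<in>PiE UNIV (\<lambda>i. (\<lambda>x. x$i) ` F). (\<Prod>i\<in>UNIV. \<psi> i (g i)))"
      by (intro sum_mono2 finite_PiE prod_nonneg) (use F \<psi>0 in auto)
    also have "\<dots> = (\<Prod>i\<in>UNIV. \<Sum>k\<in>(\<lambda>x. x$i) ` F. \<psi> i k)"
      by (rule prod_sum_PiE[symmetric]) (use F in auto)
    also have "\<dots> \<le> (\<Prod>i\<in>(UNIV::'n set). B)"
      by (intro prod_mono conjI sum_nonneg \<psi>0) (unfold \<psi>_def B_def, rule oneD_bound, use assms F in auto)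
    also have "\<dots> = B ^ CARD('n)" by simp
    finally show "(\<Sum>x\<in>F. \<bar>f ((1/r) *\<^sub>R (lat x + y))\<bar>) \<le> C * B ^ CARD('n)"
      using C0 by (simp add: mult_left_mono)
  qed
qed



definition Gd :: "(real^'n::finite \<Rightarrow> real) \<Rightarrow> real^'n \<Rightarrow> real^'n \<Rightarrow> real" where
  "Gd f z w = (\<Sum>i\<in>UNIV. w$i * partial_coord i f z)"

lemma schwartz_partial_cont:
  assumes "schwartz f" shows "isCont (partial_coord i f) z"
proof -
  have "iter_partial [i] f differentiable (at z)" using assms unfolding schwartz_def by blast
  then show ?thesis by (simp add: differentiable_imp_continuous_within)
qed

lemma schwartz_has_derivative:
  fixes f :: "real^'n::finite \<Rightarrow> real"
  assumes "schwartz f"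
  shows "(f has_derivative (\<lambda>w. Gd f z w)) (at z)"
proof -
  have "iter_partial [] f differentiable (at z)" using assms unfolding schwartz_def by blast
  then obtain D where D: "(f has_derivative D) (at z)" by (auto simp: differentiable_def)
  have lin: "linear D" using D has_derivative_linear by blast
  have pc: "partial_coord i f z = D (axis i 1)" for i
  proof -
    have "((\<lambda>t. z + t *\<^sub>R axis i 1) has_derivative (\<lambda>t. t *\<^sub>R axis i 1)) (at (0::real))"
      by (auto intro!: derivative_eq_intros)
    moreover have "(f has_derivative D) (at (z + (0::real) *\<^sub>R axis i 1))" using D by simp
    ultimately have "((\<lambda>t. f (z + t *\<^sub>R axis i 1)) has_derivative (\<lambda>t. D (t *\<^sub>R axis i 1))) (at 0)"
      by (rule has_derivative_compose)
    moreover have "(\<lambda>t. D (t *\<^sub>R axis i 1)) = (*) (D (axis i 1))"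
      using lin by (auto simp: fun_eq_iff linear_scale)
    ultimately have "((\<lambda>t. f (z + t *\<^sub>R axis i 1)) has_real_derivative D (axis i 1)) (at 0)"
      by (simp add: has_field_derivative_def)
    then show ?thesis unfolding partial_coord_def by (rule DERIV_imp_deriv)
  qed
  have "D w = Gd f z w" for w
  proof -
    have "D w = D (\<Sum>i\<in>UNIV. (w$i) *\<^sub>R axis i 1)"
      using basis_expansion[of w] by (simp add: scalar_mult_eq_scaleR)
    also have "\<dots> = (\<Sum>i\<in>UNIV. w$i * D (axis i 1))"
      using lin by (simp add: linear_sum linear_scale o_def)
    finally show ?thesis by (simp add: Gd_def pc)
  qed
  then have "D = (\<lambda>w. Gd f z w)" by auto
  then show ?thesis using D by simp
qed

lemma Gd_scale: "Gd f z (t *\<^sub>R w) = t * Gd f z w"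
  by (simp add: Gd_def sum_distrib_left mult.assoc)

lemma Gd_uminus: "Gd f z (- w) = - Gd f z w"
  by (simp add: Gd_def sum_negf)

lemma schwartz_line_deriv:
  fixes f :: "real^'n::finite \<Rightarrow> real"
  assumes "schwartz f"
  shows "((\<lambda>s. f (a + s *\<^sub>R v)) has_real_derivative Gd f (a + t *\<^sub>R v) v) (at t)"
proof -
  have "((\<lambda>s. a + s *\<^sub>R v) has_derivative (\<lambda>s. s *\<^sub>R v)) (at t)"
    by (auto intro!: derivative_eq_intros)
  from has_derivative_compose[OF this schwartz_has_derivative[OF assms]]
  have "((\<lambda>s. f (a + s *\<^sub>R v)) has_derivative (\<lambda>s. Gd f (a + t *\<^sub>R v) (s *\<^sub>R v))) (at t)" .
  moreover have "(\<lambda>s. Gd f (a + t *\<^sub>R v) (s *\<^sub>R v)) = (*) (Gd f (a + t *\<^sub>R v) v)"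
    by (auto simp: fun_eq_iff Gd_scale)
  ultimately show ?thesis by (simp add: has_field_derivative_def)
qed

lemma dir_nonzero:
  fixes f :: "real^'n::finite \<Rightarrow> real"
  assumes "schwartz f" "f x0 \<noteq> 0" "w \<noteq> 0"
  shows "\<exists>z. Gd f z w \<noteq> 0"
proof (rule ccontr)
  assume "\<not> ?thesis"
  then have G0: "Gd f z w = 0" for z by auto
  have "\<forall>t. ((\<lambda>s. f (x0 + s *\<^sub>R w)) has_real_derivative 0) (at t)"
    using schwartz_line_deriv[OF assms(1), of x0 w] G0 by simp
  then have const: "f (x0 + t *\<^sub>R w) = f (x0 + 0 *\<^sub>R w)" for t
    by (rule DERIV_isconst_all)
  obtain C where C: "\<And>x. (1 + norm x) ^ 1 * \<bar>f x\<bar> \<le> C"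
    using schwartz_decay[OF assms(1)] by blast
  define t where "t = (norm x0 + C / \<bar>f x0\<bar>) / norm w"
  have nw: "norm w > 0" using assms(3) by simp
  have fx: "\<bar>f x0\<bar> > 0" using assms(2) by simp
  have C0: "C \<ge> 0" using C[of x0] by (smt (verit) mult_nonneg_nonneg abs_ge_zero norm_ge_zero power_one_right)
  have "norm (x0 + t *\<^sub>R w) \<ge> norm (t *\<^sub>R w) - norm x0"
    by (metis add.commute norm_diff_ineq diff_minus_eq_add norm_minus_cancel)
  moreover have "norm (t *\<^sub>R w) = norm x0 + C / \<bar>f x0\<bar>"
    using nw fx C0 by (simp add: t_def)
  ultimately have big: "norm (x0 + t *\<^sub>R w) \<ge> C / \<bar>f x0\<bar>" by simp
  have "(1 + norm (x0 + t *\<^sub>R w)) * \<bar>f x0\<bar> \<le> C" using C[of "x0 + t *\<^sub>R w"] const[of t] by simp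
  moreover have "(1 + C / \<bar>f x0\<bar>) * \<bar>f x0\<bar> \<le> (1 + norm (x0 + t *\<^sub>R w)) * \<bar>f x0\<bar>"
    using big fx by (intro mult_right_mono) auto
  moreover have "(1 + C / \<bar>f x0\<bar>) * \<bar>f x0\<bar> = \<bar>f x0\<bar> + C" using fx by (simp add: field_simps)
  ultimately show False using fx by linarith
qed



lemma Gd_isCont:
  fixes f :: "real^'n::finite \<Rightarrow> real"
  assumes "schwartz f"
  shows "isCont (\<lambda>x. Gd f (fst x) (snd x)) a"
  unfolding Gd_def
  by (intro continuous_intros isCont_vec_nth isCont_o2[OF _ schwartz_partial_cont[OF assms]])

lemma separation:
  fixes f :: "real^'n::finite \<Rightarrow> real"
  assumes "schwartz f" "f x0 \<noteq> 0" "p \<noteq> q"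
  shows "\<exists>z0 a b \<gamma> \<delta> \<rho>. ((a = p \<and> b = q) \<or> (a = q \<and> b = p)) \<and> \<gamma> > 0 \<and> \<delta> > 0 \<and> \<rho> > 0 \<and>
     (\<forall>\<zeta> u v. dist \<zeta> z0 < \<rho> \<longrightarrow> dist u a < \<delta> \<longrightarrow> dist v b < \<delta> \<longrightarrow> Gd f \<zeta> (u - v) \<ge> \<gamma>)"
proof -
  obtain z0 where z0: "Gd f z0 (p - q) \<noteq> 0" using dir_nonzero[OF assms(1,2), of "p - q"] assms(3) by auto
  obtain a b where ab: "(a = p \<and> b = q) \<or> (a = q \<and> b = p)" and L: "Gd f z0 (a - b) > 0"
  proof (cases "Gd f z0 (p - q) > 0")
    case True then show ?thesis using that by blast
  next
    case False
    then have "Gd f z0 (q - p) > 0" using z0 Gd_uminus[of f z0 "p - q"] by (simp add: minus_diff_eq)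
    then show ?thesis using that by blast
  qed
  define L where "L = Gd f z0 (a - b)"
  have "isCont (\<lambda>x. Gd f (fst x) (snd x)) (z0, a - b)" by (rule Gd_isCont[OF assms(1)])
  then obtain e where e: "e > 0" and
    he: "\<And>y. dist y (z0, a - b) < e \<Longrightarrow> dist (Gd f (fst y) (snd y)) L < L/2"
  proof -
    from \<open>isCont _ _\<close> have "\<forall>e>0. \<exists>d>0. \<forall>y. dist y (z0, a - b) < d \<longrightarrow> dist (Gd f (fst y) (snd y)) L < e"
      unfolding continuous_at_eps_delta L_def by simp
    moreover have "L/2 > 0" using L by (simp add: L_def)
    ultimately show ?thesis using that by blast
  qed
  show ?thesis
  proof (intro exI conjI allI impI)
    fix \<zeta> u v :: "real^'n"
    assume h: "dist \<zeta> z0 < e/2" "dist u a < e/4" "dist v b < e/4"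
    have "dist (u - v) (a - b) = norm ((u - a) - (v - b))" by (simp add: dist_norm algebra_simps)
    also have "\<dots> \<le> norm (u - a) + norm (v - b)" by (rule norm_triangle_ineq4)
    finally have "dist (u - v) (a - b) \<le> dist u a + dist v b" by (simp add: dist_norm)
    then have d2: "dist (u - v) (a - b) < e/2" using h by simp
    have "dist (\<zeta>, u - v) (z0, a - b) \<le> dist \<zeta> z0 + dist (u - v) (a - b)"
      unfolding dist_Pair_Pair using sqrt_sum_squares_le_sum_abs[of "dist \<zeta> z0" "dist (u - v) (a - b)"] by simp
    then have "dist (\<zeta>, u - v) (z0, a - b) < e" using h d2 by simp
    from he[OF this] have "\<bar>Gd f \<zeta> (u - v) - L\<bar> < L/2" by (simp add: dist_real_def)
    then have "- (Gd f \<zeta> (u - v) - L) < L/2" by (simp only: abs_less_iff)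
    then show "Gd f \<zeta> (u - v) \<ge> L/2" by linarith
  qed (use ab L e L_def in auto)
qed



lemma (in prob_space) two_support_points:
  fixes X :: "'a \<Rightarrow> real^'n::finite"
  assumes X: "X \<in> borel_measurable M" and nc: "\<not> (\<exists>c. AE \<omega> in M. X \<omega> = c)"
  shows "\<exists>p q. p \<noteq> q \<and> (\<forall>\<delta>>0. prob {\<omega>\<in>space M. X \<omega> \<in> ball p \<delta>} > 0)
                      \<and> (\<forall>\<delta>>0. prob {\<omega>\<in>space M. X \<omega> \<in> ball q \<delta>} > 0)"
proof (rule ccontr)
  define Supp where "Supp = {p. \<forall>\<delta>>0. prob {\<omega>\<in>space M. X \<omega> \<in> ball p \<delta>} > 0}"
  assume "\<not> ?thesis"
  then have "\<And>p q. p \<in> Supp \<Longrightarrow> q \<in> Supp \<Longrightarrow> p = q" unfolding Supp_def by blast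
  then obtain c where c: "\<And>p. p \<in> Supp \<Longrightarrow> p = c"
  proof (cases "Supp = {}")
    case True then show ?thesis using that by blast
  next
    case False then obtain p0 where "p0 \<in> Supp" by blast
    then show ?thesis using that \<open>\<And>p q. p \<in> Supp \<Longrightarrow> q \<in> Supp \<Longrightarrow> p = q\<close> by blast
  qed
  define \<F> where "\<F> = {ball p \<delta> | p \<delta>. \<delta> > 0 \<and> prob {\<omega>\<in>space M. X \<omega> \<in> ball p \<delta>} = 0}"
  have opn: "\<And>S. S \<in> \<F> \<Longrightarrow> open S" unfolding \<F>_def by auto
  obtain \<F>' where F': "\<F>' \<subseteq> \<F>" "countable \<F>'" "\<Union>\<F>' = \<Union>\<F>"
    using Lindelof[OF opn] by blast
  have cover: "y \<in> \<Union>\<F>" if "y \<noteq> c" for y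
  proof -
    have "y \<notin> Supp" using c that by blast
    then obtain \<delta> where "\<delta> > 0" "\<not> prob {\<omega>\<in>space M. X \<omega> \<in> ball y \<delta>} > 0"
      unfolding Supp_def by blast
    then have "prob {\<omega>\<in>space M. X \<omega> \<in> ball y \<delta>} = 0" using measure_nonneg[of M] by (meson not_less order_antisym)
    then have "ball y \<delta> \<in> \<F>" using \<open>\<delta> > 0\<close> unfolding \<F>_def by blast
    then show ?thesis using \<open>\<delta> > 0\<close> by (metis UnionI centre_in_ball)
  qed
  have null: "AE \<omega> in M. X \<omega> \<notin> B" if hB: "B \<in> \<F>" for B
  proof -
    obtain p \<delta> where B: "B = ball p \<delta>" "prob {\<omega>\<in>space M. X \<omega> \<in> ball p \<delta>} = 0"
      using hB unfolding \<F>_def by blast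
    have "{\<omega>\<in>space M. X \<omega> \<in> ball p \<delta>} = X -` ball p \<delta> \<inter> space M" by auto
    then have ev: "{\<omega>\<in>space M. X \<omega> \<in> ball p \<delta>} \<in> sets M" using measurable_sets[OF X, of "ball p \<delta>"] by simp
    have "{\<omega>\<in>space M. X \<omega> \<in> ball p \<delta>} \<in> null_sets M"
      using ev B(2) by (simp add: emeasure_eq_measure null_setsI)
    then show ?thesis by (rule AE_I') (use B in auto)
  qed
  have "AE \<omega> in M. \<forall>B\<in>\<F>'. X \<omega> \<notin> B"
    using F' null by (subst AE_ball_countable) auto
  then have "AE \<omega> in M. X \<omega> = c"
  proof (rule AE_mp, intro AE_I2 impI)
    fix \<omega> assume "\<forall>B\<in>\<F>'. X \<omega> \<notin> B"
    then have "X \<omega> \<notin> \<Union>\<F>" using F'(3) by blast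
    then show "X \<omega> = c" using cover by blast
  qed
  then show False using nc by blast
qed

lemma (in prob_space) variance_sep:
  fixes X :: "'a \<Rightarrow> real"
  assumes X: "X \<in> borel_measurable M" and bnd: "\<And>\<omega>. \<omega> \<in> space M \<Longrightarrow> \<bar>X \<omega>\<bar> \<le> K"
    and A1: "A1 \<in> events" "prob A1 \<ge> \<pi>" "\<And>\<omega>. \<omega> \<in> A1 \<Longrightarrow> X \<omega> \<ge> \<theta> + \<gamma>"
    and A2: "A2 \<in> events" "prob A2 \<ge> \<pi>" "\<And>\<omega>. \<omega> \<in> A2 \<Longrightarrow> X \<omega> \<le> \<theta> - \<gamma>"
    and g: "\<gamma> \<ge> 0"
  shows "variance X \<ge> \<pi> * \<gamma>^2"
proof -
  define m where "m = expectation X"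
  have intX: "integrable M X" using X bnd by (intro integrable_const_bound[where B=K]) auto
  have intV: "integrable M (\<lambda>\<omega>. (X \<omega> - m)^2)"
  proof -
    have "\<bar>(X \<omega> - m)^2\<bar> \<le> (K + \<bar>m\<bar>)^2" if "\<omega> \<in> space M" for \<omega>
    proof -
      have "\<bar>X \<omega> - m\<bar> \<le> \<bar>X \<omega>\<bar> + \<bar>m\<bar>" by (rule abs_triangle_ineq4)
      then have "\<bar>X \<omega> - m\<bar> \<le> K + \<bar>m\<bar>" using bnd[OF that] by linarith
      then have "\<bar>X \<omega> - m\<bar>^2 \<le> (K + \<bar>m\<bar>)^2" by (intro power_mono) auto
      then show ?thesis by simp
    qed
    then show ?thesis using X by (intro integrable_const_bound[where B="(K + \<bar>m\<bar>)^2"]) auto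
  qed
  have key: "variance X \<ge> \<gamma>^2 * prob A" if A: "A \<in> events" and
     pt: "\<And>\<omega>. \<omega> \<in> A \<Longrightarrow> \<bar>X \<omega> - m\<bar> \<ge> \<gamma>" for A
  proof -
    have "(\<integral>\<omega>. \<gamma>^2 * indicator A \<omega> \<partial>M) \<le> (\<integral>\<omega>. (X \<omega> - m)^2 \<partial>M)"
    proof (rule integral_mono[OF _ intV])
      show "integrable M (\<lambda>\<omega>. \<gamma>^2 * indicator A \<omega>)"
        using A by (intro integrable_mult_right integrable_real_indicator) (auto simp: emeasure_eq_measure)
      fix \<omega> assume "\<omega> \<in> space M"
      show "\<gamma>^2 * indicator A \<omega> \<le> (X \<omega> - m)^2"
      proof (cases "\<omega> \<in> A")
        case True
        then have "\<gamma>^2 \<le> \<bar>X \<omega> - m\<bar>^2" using pt g by (intro power_mono) auto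
        then show ?thesis using True by simp
      qed simp
    qed
    moreover have "(\<integral>\<omega>. \<gamma>^2 * indicator A \<omega> \<partial>M) = \<gamma>^2 * prob A"
    proof -
      have "A \<inter> space M = A" using A sets.sets_into_space by blast
      then show ?thesis by simp
    qed
    ultimately show ?thesis unfolding m_def by linarith
  qed
  show ?thesis
  proof (cases "m \<le> \<theta>")
    case True
    have "variance X \<ge> \<gamma>^2 * prob A1"
    proof (rule key[OF A1(1)])
      fix \<omega> assume "\<omega> \<in> A1"
      then have "X \<omega> - m \<ge> \<gamma>" using A1(3)[of \<omega>] True by linarith
      then show "\<bar>X \<omega> - m\<bar> \<ge> \<gamma>" by linarith
    qed
    moreover have "\<gamma>^2 * prob A1 \<ge> \<gamma>^2 * \<pi>" using A1(2) by (intro mult_left_mono) auto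
    ultimately show ?thesis by (simp add: mult.commute)
  next
    case False
    have "variance X \<ge> \<gamma>^2 * prob A2"
    proof (rule key[OF A2(1)])
      fix \<omega> assume "\<omega> \<in> A2"
      then have "m - X \<omega> \<ge> \<gamma>" using A2(3)[of \<omega>] False by linarith
      then show "\<bar>X \<omega> - m\<bar> \<ge> \<gamma>" by linarith
    qed
    moreover have "\<gamma>^2 * prob A2 \<ge> \<gamma>^2 * \<pi>" using A2(2) by (intro mult_left_mono) auto
    ultimately show ?thesis by (simp add: mult.commute)
  qed
qed



lemma (in prob_space) bnd_integrable:
  fixes f :: "'a \<Rightarrow> real"
  assumes "f \<in> borel_measurable M" "\<And>\<omega>. \<omega> \<in> space M \<Longrightarrow> \<bar>f \<omega>\<bar> \<le> K"
  shows "integrable M f"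
  using assms by (intro integrable_const_bound[where B=K]) auto

lemma (in prob_space) variance_add_indep:
  fixes A B :: "'a \<Rightarrow> real"
  assumes ind: "indep_var borel A borel B"
    and mA: "A \<in> borel_measurable M" and mB: "B \<in> borel_measurable M"
    and bA: "\<And>\<omega>. \<omega> \<in> space M \<Longrightarrow> \<bar>A \<omega>\<bar> \<le> KA"
    and bB: "\<And>\<omega>. \<omega> \<in> space M \<Longrightarrow> \<bar>B \<omega>\<bar> \<le> KB"
  shows "variance (\<lambda>\<omega>. A \<omega> + B \<omega>) = variance A + variance B"
proof -
  have KA: "KA \<ge> 0" and KB: "KB \<ge> 0"
    using bA bB prob_space.not_empty[OF prob_space_axioms] by (meson abs_ge_zero ex_in_conv order_trans)+
  have sqb: "\<bar>g \<omega>\<bar> \<le> Kg \<Longrightarrow> \<bar>(g \<omega>)^2\<bar> \<le> Kg^2" for g :: "'a \<Rightarrow> real" and \<omega> Kg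
    by (metis abs_ge_zero abs_power2 power2_abs power_mono)
  have iA: "integrable M A" by (rule bnd_integrable[OF mA bA])
  have iB: "integrable M B" by (rule bnd_integrable[OF mB bB])
  have iA2: "integrable M (\<lambda>\<omega>. (A \<omega>)^2)" by (rule bnd_integrable[where K="KA^2"]) (use mA sqb bA in auto)
  have iB2: "integrable M (\<lambda>\<omega>. (B \<omega>)^2)" by (rule bnd_integrable[where K="KB^2"]) (use mB sqb bB in auto)
  have bAB: "\<bar>A \<omega> + B \<omega>\<bar> \<le> KA + KB" if "\<omega> \<in> space M" for \<omega>
    using bA[OF that] bB[OF that] abs_triangle_ineq[of "A \<omega>" "B \<omega>"] by linarith
  have iS: "integrable M (\<lambda>\<omega>. A \<omega> + B \<omega>)" using iA iB by simp
  have iS2: "integrable M (\<lambda>\<omega>. (A \<omega> + B \<omega>)^2)"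
  proof (rule bnd_integrable[where K="(KA+KB)^2"])
    show "(\<lambda>\<omega>. (A \<omega> + B \<omega>)^2) \<in> borel_measurable M" using mA mB by simp
    fix \<omega> assume "\<omega> \<in> space M"
    from sqb[of "\<lambda>\<omega>. A \<omega> + B \<omega>", OF bAB[OF this]] show "\<bar>(A \<omega> + B \<omega>)^2\<bar> \<le> (KA+KB)^2" .
  qed
  have iAB: "integrable M (\<lambda>\<omega>. A \<omega> * B \<omega>)" by (rule indep_var_integrable[OF ind iA iB])
  have eAB: "expectation (\<lambda>\<omega>. A \<omega> * B \<omega>) = expectation A * expectation B"
    by (rule indep_var_lebesgue_integral[OF ind iA iB])
  have V: "variance (\<lambda>\<omega>. A \<omega> + B \<omega>) = expectation (\<lambda>\<omega>. (A \<omega> + B \<omega>)^2) - (expectation (\<lambda>\<omega>. A \<omega> + B \<omega>))^2"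
    by (rule variance_eq[OF iS iS2])
  have e2: "expectation (\<lambda>\<omega>. (A \<omega> + B \<omega>)^2) = expectation (\<lambda>\<omega>. (A \<omega>)^2) + expectation (\<lambda>\<omega>. (B \<omega>)^2) + 2 * expectation (\<lambda>\<omega>. A \<omega> * B \<omega>)"
  proof -
    have "(\<lambda>\<omega>. (A \<omega> + B \<omega>)^2) = (\<lambda>\<omega>. ((A \<omega>)^2 + (B \<omega>)^2) + 2 * (A \<omega> * B \<omega>))"
      by (auto simp: power2_sum)
    then show ?thesis using iA2 iB2 iAB by simp
  qed
  have eS: "expectation (\<lambda>\<omega>. A \<omega> + B \<omega>) = expectation A + expectation B" using iA iB by simp
  have vA: "variance A = expectation (\<lambda>\<omega>. (A \<omega>)^2) - (expectation A)^2" by (rule variance_eq[OF iA iA2])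
  have vB: "variance B = expectation (\<lambda>\<omega>. (B \<omega>)^2) - (expectation B)^2" by (rule variance_eq[OF iB iB2])
  define vv where "vv = variance (\<lambda>\<omega>. A \<omega> + B \<omega>)"
  have V': "vv = expectation (\<lambda>\<omega>. (A \<omega>)^2) + expectation (\<lambda>\<omega>. (B \<omega>)^2) + 2 * expectation (\<lambda>\<omega>. A \<omega> * B \<omega>) - (expectation A + expectation B)^2"
    unfolding vv_def by (subst V) (simp only: e2 eS)
  have "vv = variance A + variance B" unfolding V' vA vB eAB by (simp add: power2_sum)
  then show ?thesis by (simp add: vv_def)
qed

lemma (in prob_space) variance_sum_indep:
  fixes X :: "'i \<Rightarrow> 'a \<Rightarrow> real"
  assumes indep: "indep_vars (\<lambda>_. borel) X J" and I: "finite I" "I \<subseteq> J"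
    and bnd: "\<And>i \<omega>. i \<in> J \<Longrightarrow> \<omega> \<in> space M \<Longrightarrow> \<bar>X i \<omega>\<bar> \<le> K"
  shows "variance (\<lambda>\<omega>. \<Sum>i\<in>I. X i \<omega>) = (\<Sum>i\<in>I. variance (X i))"
  using I
proof (induction I rule: finite_induct)
  case empty then show ?case by simp
next
  case (insert i I)
  have meas: "X j \<in> borel_measurable M" if "j \<in> J" for j
    using indep that unfolding indep_vars_def by auto
  have ind: "indep_var borel (X i) borel (\<lambda>\<omega>. \<Sum>i\<in>I. X i \<omega>)"
    by (rule indep_vars_sum[OF insert(1,2)]) (rule indep_vars_subset[OF indep insert(4)])
  have bS: "\<bar>\<Sum>j\<in>I. X j \<omega>\<bar> \<le> real (card I) * K" if "\<omega> \<in> space M" for \<omega>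
  proof -
    have "\<bar>\<Sum>j\<in>I. X j \<omega>\<bar> \<le> (\<Sum>j\<in>I. \<bar>X j \<omega>\<bar>)" by (rule sum_abs)
    also have "\<dots> \<le> (\<Sum>j\<in>I. K)" using bnd insert(4) that by (intro sum_mono) auto
    finally show ?thesis by simp
  qed
  have "variance (\<lambda>\<omega>. \<Sum>j\<in>insert i I. X j \<omega>) = variance (\<lambda>\<omega>. X i \<omega> + (\<Sum>j\<in>I. X j \<omega>))"
    using insert(1,2) by simp
  also have "\<dots> = variance (X i) + variance (\<lambda>\<omega>. \<Sum>j\<in>I. X j \<omega>)"
  proof (rule variance_add_indep[OF ind])
    show "(\<lambda>\<omega>. \<Sum>j\<in>I. X j \<omega>) \<in> borel_measurable M"
      using meas insert(4) by (intro borel_measurable_sum) auto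
  qed (use meas insert(4) bnd bS in auto)
  also have "variance (\<lambda>\<omega>. \<Sum>j\<in>I. X j \<omega>) = (\<Sum>j\<in>I. variance (X j))"
    using insert by auto
  finally show ?case using insert(1,2) by simp
qed



lemma (in prob_space) main_var_bound:
  fixes Y :: "'i \<Rightarrow> 'a \<Rightarrow> real" and e :: "nat \<Rightarrow> 'i"
  assumes e: "bij e"
    and indep: "indep_vars (\<lambda>_. borel) Y UNIV"
    and bnd: "\<And>i \<omega>. \<omega> \<in> space M \<Longrightarrow> \<bar>Y i \<omega>\<bar> \<le> K"
    and sumE: "\<And>n. (\<Sum>k<n. expectation (\<lambda>\<omega>. \<bar>Y (e k) \<omega>\<bar>)) \<le> L"
    and F: "finite F"
  shows "variance (\<lambda>\<omega>. infsum (\<lambda>i. Y i \<omega>) UNIV) \<ge> (\<Sum>i\<in>F. variance (Y i))"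
proof -
  have meas[measurable]: "Y i \<in> borel_measurable M" for i
    using indep unfolding indep_vars_def by auto
  have K0: "K \<ge> 0" using bnd[of _ undefined] not_empty by (meson abs_ge_zero ex_in_conv order_trans)
  have injE: "inj e" using e bij_is_inj by auto
  define Z where "Z k \<omega> = Y (e k) \<omega>" for k \<omega>
  have measZ[measurable]: "Z k \<in> borel_measurable M" for k unfolding Z_def by simp
  have bndZ: "\<omega> \<in> space M \<Longrightarrow> \<bar>Z k \<omega>\<bar> \<le> K" for k \<omega> unfolding Z_def by (rule bnd)
  have intZ: "integrable M (Z k)" for k by (rule bnd_integrable[OF measZ bndZ])
  have intaZ: "integrable M (\<lambda>\<omega>. \<bar>Z k \<omega>\<bar>)" for k using intZ by simp
  have L0: "L \<ge> 0" using sumE[of 0] by simp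
  define S where "S \<omega> = (\<Sum>k. ennreal \<bar>Z k \<omega>\<bar>)" for \<omega>
  have measS[measurable]: "S \<in> borel_measurable M" unfolding S_def by measurable
  have EZ: "(\<integral>\<^sup>+\<omega>. ennreal \<bar>Z k \<omega>\<bar> \<partial>M) = ennreal (expectation (\<lambda>\<omega>. \<bar>Z k \<omega>\<bar>))" for k
    by (rule nn_integral_eq_integral[OF intaZ]) auto
  have sumE': "(\<Sum>k<n. expectation (\<lambda>\<omega>. \<bar>Z k \<omega>\<bar>)) \<le> L" for n unfolding Z_def by (rule sumE)
  have EZ0: "expectation (\<lambda>\<omega>. \<bar>Z k \<omega>\<bar>) \<ge> 0" for k by simp
  have summE: "summable (\<lambda>k. expectation (\<lambda>\<omega>. \<bar>Z k \<omega>\<bar>))"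
  proof (rule bounded_imp_summable[where B=L])
    fix n show "(\<Sum>k\<le>n. expectation (\<lambda>\<omega>. \<bar>Z k \<omega>\<bar>)) \<le> L"
      using sumE'[of "Suc n"] by (simp add: lessThan_Suc_atMost)
  qed (rule EZ0)
  have intS: "(\<integral>\<^sup>+\<omega>. S \<omega> \<partial>M) \<le> ennreal L"
  proof -
    have "(\<integral>\<^sup>+\<omega>. S \<omega> \<partial>M) = (\<Sum>k. \<integral>\<^sup>+\<omega>. ennreal \<bar>Z k \<omega>\<bar> \<partial>M)"
      unfolding S_def by (rule nn_integral_suminf) simp
    also have "\<dots> = (\<Sum>k. ennreal (expectation (\<lambda>\<omega>. \<bar>Z k \<omega>\<bar>)))" by (simp only: EZ)
    also have "\<dots> = ennreal (\<Sum>k. expectation (\<lambda>\<omega>. \<bar>Z k \<omega>\<bar>))"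
      by (rule suminf_ennreal2[OF EZ0 summE])
    also have "\<dots> \<le> ennreal L"
      by (intro ennreal_leI suminf_le_const[OF summE] sumE')
    finally show ?thesis .
  qed
  have AEfin: "AE \<omega> in M. S \<omega> \<noteq> \<infinity>"
    by (rule nn_integral_PInf_AE[OF measS]) (use intS in \<open>auto simp: top_unique\<close>)
  define Tn where "Tn n \<omega> = (\<Sum>k<n. Z k \<omega>)" for n \<omega>
  define Sn where "Sn n \<omega> = (\<Sum>k<n. \<bar>Z k \<omega>\<bar>)" for n \<omega>
  define w where "w \<omega> = enn2real (S \<omega>)" for \<omega>
  have measTn[measurable]: "Tn n \<in> borel_measurable M" for n unfolding Tn_def by measurable
  have measSn[measurable]: "Sn n \<in> borel_measurable M" for n unfolding Sn_def by measurable
  have measw[measurable]: "w \<in> borel_measurable M" unfolding w_def by measurable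
  have fin_summ: "summable (\<lambda>k. \<bar>Z k \<omega>\<bar>)" if "S \<omega> \<noteq> \<infinity>" for \<omega>
  proof (rule summable_suminf_not_top)
    show "(\<Sum>k. ennreal \<bar>Z k \<omega>\<bar>) \<noteq> top" using that unfolding S_def by simp
  qed simp
  have w_eq: "w \<omega> = (\<Sum>k. \<bar>Z k \<omega>\<bar>)" if "S \<omega> \<noteq> \<infinity>" for \<omega>
  proof -
    have "(\<Sum>k. ennreal \<bar>Z k \<omega>\<bar>) = ennreal (\<Sum>k. \<bar>Z k \<omega>\<bar>)"
      by (rule suminf_ennreal2[OF _ fin_summ[OF that]]) simp
    then show ?thesis unfolding w_def S_def by (simp add: suminf_nonneg fin_summ[OF that])
  qed
  have Sn_le_w: "Sn n \<omega> \<le> w \<omega>" if "S \<omega> \<noteq> \<infinity>" for n \<omega>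
    unfolding Sn_def w_eq[OF that] by (rule sum_le_suminf[OF fin_summ[OF that]]) auto
  have Tn_le: "\<bar>Tn n \<omega>\<bar> \<le> Sn n \<omega>" for n \<omega> unfolding Tn_def Sn_def by (rule sum_abs)
  have Sn0: "Sn n \<omega> \<ge> 0" for n \<omega> unfolding Sn_def by (simp add: sum_nonneg)
  have w0: "w \<omega> \<ge> 0" for \<omega> unfolding w_def by simp
  define T where "T \<omega> = infsum (\<lambda>i. Y i \<omega>) UNIV" for \<omega>
  have bijb: "bij_betw e UNIV UNIV" using e by (simp add: bij_def bij_betw_def)
  have T_reidx: "T \<omega> = infsum (\<lambda>k. Z k \<omega>) UNIV" for \<omega>
    unfolding T_def Z_def by (rule infsum_reindex_bij_betw[OF bijb, symmetric])
  have T_fin: "(\<lambda>n. Tn n \<omega>) \<longlonglongrightarrow> T \<omega>" if "S \<omega> \<noteq> \<infinity>" for \<omega>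
  proof -
    have sa: "summable (\<lambda>k. norm (Z k \<omega>))" using fin_summ[OF that] by simp
    have "summable (\<lambda>k. Z k \<omega>)" using fin_summ[OF that] by (rule summable_rabs_cancel)
    then have sm: "(\<lambda>k. Z k \<omega>) sums (\<Sum>k. Z k \<omega>)" by (rule summable_sums)
    have "((\<lambda>k. Z k \<omega>) has_sum (\<Sum>k. Z k \<omega>)) UNIV" by (rule norm_summable_imp_has_sum[OF sa sm])
    then have "T \<omega> = (\<Sum>k. Z k \<omega>)" unfolding T_reidx by (rule infsumI)
    then show ?thesis using sm unfolding Tn_def sums_def by simp
  qed
  have T_inf: "T \<omega> = 0" if "S \<omega> = \<infinity>" for \<omega>
  proof -
    have "\<not> (\<lambda>k. Z k \<omega>) summable_on UNIV"
    proof
      assume "(\<lambda>k. Z k \<omega>) summable_on UNIV"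
      then have "(\<lambda>k. \<bar>Z k \<omega>\<bar>) summable_on UNIV"
        using summable_on_iff_abs_summable_on_real by force
      then have "((\<lambda>k. \<bar>Z k \<omega>\<bar>) has_sum (infsum (\<lambda>k. \<bar>Z k \<omega>\<bar>) UNIV)) UNIV" by (rule has_sum_infsum)
      then have "(\<lambda>k. \<bar>Z k \<omega>\<bar>) sums (infsum (\<lambda>k. \<bar>Z k \<omega>\<bar>) UNIV)" by (rule has_sum_imp_sums)
      then have "summable (\<lambda>k. \<bar>Z k \<omega>\<bar>)" by (rule sums_summable)
      then have "(\<Sum>k. ennreal \<bar>Z k \<omega>\<bar>) \<noteq> top" by (rule ennreal_suminf_neq_top) simp
      then have "S \<omega> \<noteq> \<infinity>" unfolding S_def by simp
      then show False using that by simp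
    qed
    then show ?thesis unfolding T_reidx by (rule infsum_not_exists)
  qed
  have T_lim: "T \<omega> = lim (\<lambda>n. if S \<omega> \<noteq> \<infinity> then Tn n \<omega> else 0)" for \<omega>
  proof (cases "S \<omega> = \<infinity>")
    case True then show ?thesis using T_inf by simp
  next
    case False then show ?thesis using T_fin[OF False] by (simp add: limI)
  qed
  have measT[measurable]: "T \<in> borel_measurable M"
  proof -
    have "(\<lambda>\<omega>. lim (\<lambda>n. if S \<omega> \<noteq> \<infinity> then Tn n \<omega> else 0)) \<in> borel_measurable M"
      by measurable
    then show ?thesis using T_lim by (metis (no_types, lifting) ext)
  qed
  have nnw: "(\<integral>\<^sup>+\<omega>. ennreal (norm (w \<omega>)) \<partial>M) \<le> (\<integral>\<^sup>+\<omega>. S \<omega> \<partial>M)"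
  proof (rule nn_integral_mono)
    fix \<omega> show "ennreal (norm (w \<omega>)) \<le> S \<omega>"
      unfolding w_def by (simp add: ennreal_enn2real_if)
  qed
  have intw: "integrable M w"
  proof (rule integrableI_bounded[OF measw])
    have "(\<integral>\<^sup>+\<omega>. ennreal (norm (w \<omega>)) \<partial>M) \<le> ennreal L" using nnw intS by (rule order_trans)
    also have "ennreal L < \<infinity>" by simp
    finally show "(\<integral>\<^sup>+\<omega>. ennreal (norm (w \<omega>)) \<partial>M) < \<infinity>" .
  qed
  have Sn_re: "Sn n \<omega> = (\<Sum>x\<in>e ` {..<n}. \<bar>Y x \<omega>\<bar>)" for n \<omega>
    unfolding Sn_def Z_def using injE by (simp add: sum.reindex inj_on_subset[OF injE])
  have Tn_re: "Tn n \<omega> = (\<Sum>x\<in>e ` {..<n}. Y x \<omega>)" for n \<omega>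
    unfolding Tn_def Z_def using injE by (simp add: sum.reindex inj_on_subset[OF injE])
  have indepA: "indep_vars (\<lambda>_. borel) (\<lambda>i \<omega>. \<bar>Y i \<omega>\<bar>) UNIV"
    by (rule indep_vars_compose2[OF indep, where Y="\<lambda>_ x. \<bar>x\<bar>"]) simp
  have int2: "integrable M (\<lambda>\<omega>. (Z k \<omega>)^2)" for k
  proof (rule bnd_integrable[where K="K^2"])
    fix \<omega> assume "\<omega> \<in> space M"
    then have "\<bar>Z k \<omega>\<bar>^2 \<le> K^2" using bndZ by (intro power_mono) auto
    then show "\<bar>(Z k \<omega>)^2\<bar> \<le> K^2" by simp
  qed simp
  have varA: "variance (\<lambda>\<omega>. \<bar>Z k \<omega>\<bar>) \<le> K * expectation (\<lambda>\<omega>. \<bar>Z k \<omega>\<bar>)" for k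
  proof -
    have "variance (\<lambda>\<omega>. \<bar>Z k \<omega>\<bar>) = expectation (\<lambda>\<omega>. (\<bar>Z k \<omega>\<bar>)^2) - (expectation (\<lambda>\<omega>. \<bar>Z k \<omega>\<bar>))^2"
      by (rule variance_eq) (use intaZ int2 in simp_all)
    also have "\<dots> \<le> expectation (\<lambda>\<omega>. (Z k \<omega>)^2)" by simp
    also have "\<dots> \<le> expectation (\<lambda>\<omega>. K * \<bar>Z k \<omega>\<bar>)"
    proof (rule integral_mono[OF int2])
      show "integrable M (\<lambda>\<omega>. K * \<bar>Z k \<omega>\<bar>)" using intaZ by simp
      fix \<omega> assume "\<omega> \<in> space M"
      then have "\<bar>Z k \<omega>\<bar> * \<bar>Z k \<omega>\<bar> \<le> K * \<bar>Z k \<omega>\<bar>" using bndZ by (intro mult_right_mono) auto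
      then show "(Z k \<omega>)^2 \<le> K * \<bar>Z k \<omega>\<bar>" by (simp add: power2_eq_square abs_mult[symmetric])
    qed
    also have "\<dots> = K * expectation (\<lambda>\<omega>. \<bar>Z k \<omega>\<bar>)" by simp
    finally show ?thesis .
  qed
  have bSn: "\<bar>Sn n \<omega>\<bar> \<le> real n * K" if "\<omega> \<in> space M" for n \<omega>
  proof -
    have "\<bar>Sn n \<omega>\<bar> = (\<Sum>k<n. \<bar>Z k \<omega>\<bar>)" using Sn0[of n \<omega>] unfolding Sn_def by simp
    also have "\<dots> \<le> (\<Sum>k<n. K)" using bndZ[OF that] by (intro sum_mono) auto
    finally show ?thesis by simp
  qed
  have bTn: "\<bar>Tn n \<omega>\<bar> \<le> real n * K" if "\<omega> \<in> space M" for n \<omega>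
    using Tn_le[of n \<omega>] bSn[OF that, of n] by simp
  have intSn: "integrable M (Sn n)" for n by (rule bnd_integrable[OF measSn bSn])
  have sq_bnd: "\<bar>g \<omega>\<bar> \<le> c \<Longrightarrow> \<bar>(g \<omega>)^2\<bar> \<le> c^2" for g :: "'a \<Rightarrow> real" and \<omega> c
    by (metis abs_ge_zero abs_power2 power2_abs power_mono)
  have intSn2: "integrable M (\<lambda>\<omega>. (Sn n \<omega>)^2)" for n
    by (rule bnd_integrable[where K="(real n * K)^2"]) (use bSn sq_bnd[of "Sn n"] in auto)
  have intTn: "integrable M (Tn n)" for n by (rule bnd_integrable[OF measTn bTn])
  have intTn2: "integrable M (\<lambda>\<omega>. (Tn n \<omega>)^2)" for n
    by (rule bnd_integrable[where K="(real n * K)^2"]) (use bTn sq_bnd[of "Tn n"] in auto)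
  have ESn: "expectation (Sn n) = (\<Sum>k<n. expectation (\<lambda>\<omega>. \<bar>Z k \<omega>\<bar>))" for n
    unfolding Sn_def by (rule Bochner_Integration.integral_sum[where f="\<lambda>k \<omega>. \<bar>Z k \<omega>\<bar>"]) (rule intaZ)
  have ESn0: "expectation (Sn n) \<ge> 0" for n unfolding ESn by (simp add: sum_nonneg)
  have varSn: "variance (Sn n) = (\<Sum>k<n. variance (\<lambda>\<omega>. \<bar>Z k \<omega>\<bar>))" for n
  proof -
    have "variance (Sn n) = variance (\<lambda>\<omega>. \<Sum>x\<in>e ` {..<n}. \<bar>Y x \<omega>\<bar>)" unfolding Sn_re ..
    also have "\<dots> = (\<Sum>x\<in>e ` {..<n}. variance (\<lambda>\<omega>. \<bar>Y x \<omega>\<bar>))"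
      by (rule variance_sum_indep[OF indepA, where K=K]) (use bnd in auto)
    also have "\<dots> = (\<Sum>k<n. variance (\<lambda>\<omega>. \<bar>Z k \<omega>\<bar>))"
      unfolding Z_def by (simp add: sum.reindex inj_on_subset[OF injE])
    finally show ?thesis .
  qed
  have ESn2: "expectation (\<lambda>\<omega>. (Sn n \<omega>)^2) \<le> K * L + L^2" for n
  proof -
    have "expectation (\<lambda>\<omega>. (Sn n \<omega>)^2) = variance (Sn n) + (expectation (Sn n))^2"
      using variance_eq[OF intSn intSn2, of n] by simp
    also have "variance (Sn n) \<le> (\<Sum>k<n. K * expectation (\<lambda>\<omega>. \<bar>Z k \<omega>\<bar>))"
      unfolding varSn by (intro sum_mono varA)
    also have "\<dots> = K * expectation (Sn n)" unfolding ESn by (simp add: sum_distrib_left)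
    also have "\<dots> \<le> K * L" using K0 sumE'[of n] unfolding ESn by (intro mult_left_mono) auto
    also have "(expectation (Sn n))^2 \<le> L^2" using ESn0[of n] sumE'[of n] unfolding ESn by (intro power_mono) auto
    finally show ?thesis by simp
  qed
  have incS: "incseq (\<lambda>n \<omega>. ennreal ((Sn n \<omega>)^2))"
  proof (rule incseq_SucI, rule le_funI)
    fix n \<omega>
    have "Sn n \<omega> \<le> Sn (Suc n) \<omega>" unfolding Sn_def by simp
    then show "ennreal ((Sn n \<omega>)^2) \<le> ennreal ((Sn (Suc n) \<omega>)^2)"
      using Sn0[of n \<omega>] by (intro ennreal_leI power_mono) auto
  qed
  have pw: "ennreal ((w \<omega>)^2) \<le> (SUP n. ennreal ((Sn n \<omega>)^2))" for \<omega>
  proof (cases "S \<omega> = \<infinity>")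
    case True then show ?thesis by (simp add: w_def)
  next
    case False
    have "(\<lambda>n. Sn n \<omega>) \<longlonglongrightarrow> w \<omega>"
      unfolding w_eq[OF False] Sn_def using summable_LIMSEQ[OF fin_summ[OF False]] by simp
    then have "(\<lambda>n. ennreal ((Sn n \<omega>)^2)) \<longlonglongrightarrow> ennreal ((w \<omega>)^2)"
      by (intro tendsto_ennrealI tendsto_power)
    moreover have "incseq (\<lambda>n. ennreal ((Sn n \<omega>)^2))" using incS by (auto simp: incseq_def le_fun_def)
    ultimately show ?thesis using SUP_Lim by (metis order_refl)
  qed
  have nnw2: "(\<integral>\<^sup>+\<omega>. ennreal (norm ((w \<omega>)^2)) \<partial>M) \<le> ennreal (K * L + L^2)"
  proof -
    have "(\<integral>\<^sup>+\<omega>. ennreal (norm ((w \<omega>)^2)) \<partial>M) \<le> (\<integral>\<^sup>+\<omega>. (SUP n. ennreal ((Sn n \<omega>)^2)) \<partial>M)"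
      by (rule nn_integral_mono) (use pw in simp)
    also have "\<dots> = (SUP n. (\<integral>\<^sup>+\<omega>. ennreal ((Sn n \<omega>)^2) \<partial>M))"
      by (rule nn_integral_monotone_convergence_SUP[OF incS]) simp
    also have "\<dots> \<le> ennreal (K * L + L^2)"
    proof (rule SUP_least)
      fix n
      have "(\<integral>\<^sup>+\<omega>. ennreal ((Sn n \<omega>)^2) \<partial>M) = ennreal (expectation (\<lambda>\<omega>. (Sn n \<omega>)^2))"
        by (rule nn_integral_eq_integral[OF intSn2]) simp
      also have "\<dots> \<le> ennreal (K * L + L^2)" by (rule ennreal_leI[OF ESn2])
      finally show "(\<integral>\<^sup>+\<omega>. ennreal ((Sn n \<omega>)^2) \<partial>M) \<le> ennreal (K * L + L^2)" .
    qed
    finally show ?thesis .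
  qed
  have intw2: "integrable M (\<lambda>\<omega>. (w \<omega>)^2)"
  proof (rule integrableI_bounded)
    have "(\<integral>\<^sup>+\<omega>. ennreal (norm ((w \<omega>)^2)) \<partial>M) \<le> ennreal (K * L + L^2)" by (rule nnw2)
    also have "ennreal (K * L + L^2) < \<infinity>" by simp
    finally show "(\<integral>\<^sup>+\<omega>. ennreal (norm ((w \<omega>)^2)) \<partial>M) < \<infinity>" .
  qed simp
  have AEconv: "AE \<omega> in M. (\<lambda>n. Tn n \<omega>) \<longlonglongrightarrow> T \<omega>"
    using AEfin by eventually_elim (rule T_fin)
  have AEconv2: "AE \<omega> in M. (\<lambda>n. (Tn n \<omega>)^2) \<longlonglongrightarrow> (T \<omega>)^2"
    using AEconv by eventually_elim (rule tendsto_power)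
  have AEb: "AE \<omega> in M. norm (Tn n \<omega>) \<le> w \<omega>" for n
    using AEfin by eventually_elim (use Tn_le Sn_le_w in \<open>metis order_trans real_norm_def\<close>)
  have AEb2: "AE \<omega> in M. norm ((Tn n \<omega>)^2) \<le> (w \<omega>)^2" for n
    using AEb[of n]
  proof eventually_elim
    fix \<omega> assume "norm (Tn n \<omega>) \<le> w \<omega>"
    then have "\<bar>(Tn n \<omega>)^2\<bar> \<le> (w \<omega>)^2" using sq_bnd[of "Tn n" \<omega> "w \<omega>"] by simp
    then show "norm ((Tn n \<omega>)^2) \<le> (w \<omega>)^2" by simp
  qed
  have intT: "integrable M T"
    by (rule integrable_dominated_convergence[OF measT measTn intw AEconv AEb])
  have limE: "(\<lambda>n. expectation (Tn n)) \<longlonglongrightarrow> expectation T"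
    by (rule integral_dominated_convergence[OF measT measTn intw AEconv AEb])
  have intT2: "integrable M (\<lambda>\<omega>. (T \<omega>)^2)"
    by (rule integrable_dominated_convergence[OF _ _ intw2 AEconv2 AEb2]) simp_all
  have limE2: "(\<lambda>n. expectation (\<lambda>\<omega>. (Tn n \<omega>)^2)) \<longlonglongrightarrow> expectation (\<lambda>\<omega>. (T \<omega>)^2)"
    by (rule integral_dominated_convergence[OF _ _ intw2 AEconv2 AEb2]) simp_all
  have limV: "(\<lambda>n. variance (Tn n)) \<longlonglongrightarrow> variance T"
  proof -
    have "(\<lambda>n. expectation (\<lambda>\<omega>. (Tn n \<omega>)^2) - (expectation (Tn n))^2) \<longlonglongrightarrow> expectation (\<lambda>\<omega>. (T \<omega>)^2) - (expectation T)^2"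
      by (intro tendsto_diff tendsto_power limE limE2)
    moreover have "variance (Tn n) = expectation (\<lambda>\<omega>. (Tn n \<omega>)^2) - (expectation (Tn n))^2" for n
      by (rule variance_eq[OF intTn intTn2])
    moreover have "variance T = expectation (\<lambda>\<omega>. (T \<omega>)^2) - (expectation T)^2"
      by (rule variance_eq[OF intT intT2])
    ultimately show ?thesis by simp
  qed
  have varTn: "variance (Tn n) = (\<Sum>x\<in>e ` {..<n}. variance (Y x))" for n
  proof -
    have "variance (Tn n) = variance (\<lambda>\<omega>. \<Sum>x\<in>e ` {..<n}. Y x \<omega>)" unfolding Tn_re ..
    also have "\<dots> = (\<Sum>x\<in>e ` {..<n}. variance (Y x))"
      by (rule variance_sum_indep[OF indep, where K=K]) (use bnd in auto)
    finally show ?thesis .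
  qed
  obtain N where N: "inv e ` F \<subseteq> {..<N}" using F finite_nat_iff_bounded by blast
  have FN: "F \<subseteq> e ` {..<n}" if "n \<ge> N" for n
  proof
    fix x assume "x \<in> F"
    then have "inv e x < n" using N that by auto
    moreover have "e (inv e x) = x" using e by (meson bij_inv_eq_iff)
    ultimately show "x \<in> e ` {..<n}" by (metis imageI lessThan_iff)
  qed
  have "(\<Sum>i\<in>F. variance (Y i)) \<le> variance T"
  proof (rule LIMSEQ_le_const[OF limV], intro exI allI impI)
    fix n assume "n \<ge> N"
    show "(\<Sum>i\<in>F. variance (Y i)) \<le> variance (Tn n)"
      unfolding varTn by (rule sum_mono2) (use FN[OF \<open>n \<ge> N\<close>] variance_positive in auto)
  qed
  then show ?thesis unfolding T_def .
qed



lemma mvt_sep: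
  fixes f :: "real^'n::finite \<Rightarrow> real"
  assumes sf: "schwartz f" and r: "r > 0"
    and sep: "\<forall>\<zeta> u v. dist \<zeta> z0 < \<rho> \<longrightarrow> dist u a < \<delta> \<longrightarrow> dist v b < \<delta> \<longrightarrow> Gd f \<zeta> (u - v) \<ge> \<gamma>"
    and hx: "dist ((1/r) *\<^sub>R lat x) z0 < \<rho>/2"
    and hr: "(norm a + norm b + 2*\<delta>)/r < \<rho>/2"
    and u: "dist u a < \<delta>" and v: "dist v b < \<delta>"
  shows "f ((1/r) *\<^sub>R (lat x + u)) - f ((1/r) *\<^sub>R (lat x + v)) \<ge> \<gamma> / r"
proof -
  define A where "A = (1/r) *\<^sub>R (lat x + u)"
  define B where "B = (1/r) *\<^sub>R (lat x + v)"
  have "\<exists>\<tau>. 0 < \<tau> \<and> \<tau> < 1 \<and> f (B + 1 *\<^sub>R (A - B)) - f (B + 0 *\<^sub>R (A - B)) = (1 - 0) * Gd f (B + \<tau> *\<^sub>R (A - B)) (A - B)"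
    by (rule MVT2) (auto intro: schwartz_line_deriv[OF sf])
  then obtain \<tau> where \<tau>: "0 < \<tau>" "\<tau> < 1" and eq: "f A - f B = Gd f (B + \<tau> *\<^sub>R (A - B)) (A - B)"
    by auto
  define \<zeta> where "\<zeta> = B + \<tau> *\<^sub>R (A - B)"
  have AB: "A - B = (1/r) *\<^sub>R (u - v)" unfolding A_def B_def by (simp add: algebra_simps)
  have \<zeta>: "\<zeta> = (1/r) *\<^sub>R lat x + (1/r) *\<^sub>R ((1 - \<tau>) *\<^sub>R v + \<tau> *\<^sub>R u)"
    unfolding \<zeta>_def AB unfolding B_def by (simp add: algebra_simps)
  have nu: "norm u \<le> norm a + \<delta>" using u norm_triangle_ineq2[of u a] by (simp add: dist_norm)
  have nv: "norm v \<le> norm b + \<delta>" using v norm_triangle_ineq2[of v b] by (simp add: dist_norm)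
  have "norm ((1 - \<tau>) *\<^sub>R v + \<tau> *\<^sub>R u) \<le> (1 - \<tau>) * norm v + \<tau> * norm u"
    using \<tau> by (metis norm_triangle_le norm_scaleR abs_of_pos abs_of_nonneg diff_ge_0_iff_ge less_imp_le order_refl)
  also have "\<dots> \<le> norm v + norm u" using \<tau> by (smt (verit, ccfv_SIG) mult_left_le_one_le norm_ge_zero)
  finally have "norm ((1 - \<tau>) *\<^sub>R v + \<tau> *\<^sub>R u) \<le> norm a + norm b + 2*\<delta>" using nu nv by simp
  then have "norm ((1/r) *\<^sub>R ((1 - \<tau>) *\<^sub>R v + \<tau> *\<^sub>R u)) \<le> (norm a + norm b + 2*\<delta>)/r"
    using r by (simp add: divide_right_mono)
  then have small: "norm ((1/r) *\<^sub>R ((1 - \<tau>) *\<^sub>R v + \<tau> *\<^sub>R u)) < \<rho>/2" using hr by linarith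
  have "dist \<zeta> z0 \<le> dist ((1/r) *\<^sub>R lat x) z0 + norm ((1/r) *\<^sub>R ((1 - \<tau>) *\<^sub>R v + \<tau> *\<^sub>R u))"
    unfolding \<zeta> dist_norm by (metis add.commute add_diff_eq norm_triangle_ineq diff_add_eq)
  then have "dist \<zeta> z0 < \<rho>" using hx small by linarith
  then have "Gd f \<zeta> (u - v) \<ge> \<gamma>" using sep u v by blast
  moreover have "f A - f B = (1/r) * Gd f \<zeta> (u - v)" using eq unfolding \<zeta>_def AB by (simp add: Gd_scale)
  ultimately show ?thesis using r unfolding A_def B_def by (simp add: divide_right_mono)
qed

lemma lattice_count:
  assumes rho: "\<rho> > 0" and r: "r > 0" and rs: "r * (\<rho> / (4 * real CARD('n))) \<ge> 2"
  shows "\<exists>F::(int^'n::finite) set. finite F \<and> (\<forall>x\<in>F. dist ((1/r) *\<^sub>R lat x) z0 < \<rho>/2) \<and>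
            real (card F) \<ge> (r * (\<rho> / (4 * real CARD('n))) / 2) ^ CARD('n)"
proof -
  define s where "s = \<rho> / (4 * real CARD('n))"
  have s0: "s > 0" using rho by (simp add: s_def)
  define m where "m = nat \<lfloor>r * s\<rfloor>"
  have m: "real m \<le> r * s" "real m \<ge> r * s - 1" "m \<ge> 1"
    using rs s0 r unfolding m_def s_def[symmetric] by linarith+
  define c where "c i = \<lceil>r * z0$i\<rceil>" for i
  define F where "F = vec_lambda ` (PiE UNIV (\<lambda>i. {c i ..< c i + int m}))"
  have inj: "inj_on vec_lambda (PiE UNIV (\<lambda>i. {c i ..< c i + int m}))"
    by (auto simp: inj_on_def)
  have cardF: "card F = m ^ CARD('n)"
    unfolding F_def by (simp add: card_image[OF inj] card_PiE)
  have finF: "finite F" unfolding F_def by (auto intro!: finite_PiE)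
  have distF: "dist ((1/r) *\<^sub>R lat x) z0 < \<rho>/2" if xF: "x \<in> F" for x
  proof -
    obtain g where g: "g \<in> PiE UNIV (\<lambda>i. {c i ..< c i + int m})" "x = vec_lambda g"
      using xF unfolding F_def by blast
    have comp: "\<bar>((1/r) *\<^sub>R lat x - z0) $ i\<bar> < s" for i
    proof -
      have xi: "x $ i \<ge> c i" "x $ i < c i + int m" using g by auto
      have c1: "real_of_int (c i) \<ge> r * z0$i" "real_of_int (c i) < r * z0$i + 1"
        unfolding c_def by linarith+
      have lo: "real_of_int (x $ i) \<ge> r * z0$i" using xi c1 by linarith
      have hi: "real_of_int (x $ i) < r * z0$i + r * s"
      proof -
        have "x $ i \<le> c i + int m - 1" using xi by linarith
        then have "real_of_int (x $ i) \<le> real_of_int (c i) + real m - 1" by linarith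
        then show ?thesis using c1 m by linarith
      qed
      have "((1/r) *\<^sub>R lat x - z0) $ i = real_of_int (x $ i) / r - z0 $ i" by simp
      also have "\<dots> = (real_of_int (x $ i) - r * z0$i) / r" using r by (simp add: field_simps)
      finally have eqc: "((1/r) *\<^sub>R lat x - z0) $ i = (real_of_int (x $ i) - r * z0$i) / r" .
      have "0 \<le> (real_of_int (x $ i) - r * z0$i) / r" using lo r by simp
      moreover have "(real_of_int (x $ i) - r * z0$i) / r < s" using hi r by (simp add: field_simps)
      ultimately show ?thesis unfolding eqc by simp
    qed
    have "dist ((1/r) *\<^sub>R lat x) z0 \<le> (\<Sum>i\<in>UNIV. \<bar>((1/r) *\<^sub>R lat x - z0) $ i\<bar>)"
      unfolding dist_norm by (rule norm_le_l1_cart)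
    also have "\<dots> < (\<Sum>i\<in>(UNIV::'n set). s)" by (rule sum_strict_mono, simp, simp, rule comp)
    also have "\<dots> = real CARD('n) * s" by simp
    also have "\<dots> = \<rho>/4" unfolding s_def by simp
    finally show ?thesis using rho by simp
  qed
  have "(r * s / 2) ^ CARD('n) \<le> real m ^ CARD('n)"
    using m rs s_def by (intro power_mono) auto
  then show ?thesis using finF distF cardF unfolding s_def by (intro exI[of _ F]) auto
qed



theorem lemma3p1:
  fixes f :: "real^'n::finite \<Rightarrow> real"
    and M :: "'a measure"
    and \<xi> :: "int^'n \<Rightarrow> 'a \<Rightarrow> real^'n"
    and h :: "real \<Rightarrow> real"
  assumes "schwartz f"
    and "\<exists>x0. f x0 \<noteq> 0"
    and "prob_space M"
    and "\<And>x. \<xi> x \<in> borel_measurable M"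
    and "prob_space.indep_vars M (\<lambda>_. borel) \<xi> UNIV"
    and "\<And>x y. distr M borel (\<xi> x) = distr M borel (\<xi> y)"
    and "\<not> (\<exists>c. AE \<omega> in M. \<xi> 0 \<omega> = c)"
    and "\<And>r. r > 0 \<Longrightarrow> h r > 0"
    and "(h \<longlongrightarrow> 0) at_top"
  shows "\<exists>C>0. \<exists>r0>0. \<forall>r>r0.
           prob_space.variance M (\<lambda>\<omega>. \<Sum>\<^sub>\<infinity>x\<in>UNIV. f ((1 / r) *\<^sub>R (lat x + \<xi> x \<omega>)))
             \<ge> C * r powr (real CARD('n) - 2) * h r"
proof -
  note sf = assms(1) and meas[measurable] = assms(4) and ind = assms(5) and dst = assms(6)
  interpret P: prob_space M by (rule assms(3))
  obtain x0 where fx0: "f x0 \<noteq> 0" using assms(2) by blast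
  obtain p q where pq: "p \<noteq> q" and pp: "\<forall>\<delta>>0. P.prob {\<omega>\<in>space M. \<xi> 0 \<omega> \<in> ball p \<delta>} > 0"
     and qq: "\<forall>\<delta>>0. P.prob {\<omega>\<in>space M. \<xi> 0 \<omega> \<in> ball q \<delta>} > 0"
    using P.two_support_points[OF meas[of 0] assms(7)] by blast
  obtain z0 a b \<gamma> \<delta> \<rho> where ab: "(a = p \<and> b = q) \<or> (a = q \<and> b = p)" and g0: "\<gamma> > 0"
    and d0: "\<delta> > 0" and rho0: "\<rho> > 0"
    and sep: "\<forall>\<zeta> u v. dist \<zeta> z0 < \<rho> \<longrightarrow> dist u a < \<delta> \<longrightarrow> dist v b < \<delta> \<longrightarrow> Gd f \<zeta> (u - v) \<ge> \<gamma>"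
    using separation[OF sf fx0 pq] by blast
  define \<pi>1 where "\<pi>1 = P.prob {\<omega>\<in>space M. \<xi> 0 \<omega> \<in> ball a \<delta>}"
  define \<pi>2 where "\<pi>2 = P.prob {\<omega>\<in>space M. \<xi> 0 \<omega> \<in> ball b \<delta>}"
  have \<pi>1: "\<pi>1 > 0" using ab pp qq d0 unfolding \<pi>1_def by auto
  have \<pi>2: "\<pi>2 > 0" using ab pp qq d0 unfolding \<pi>2_def by auto
  define \<pi> where "\<pi> = min \<pi>1 \<pi>2"
  have \<pi>0: "\<pi> > 0" using \<pi>1 \<pi>2 by (simp add: \<pi>_def)
  have probx: "P.prob {\<omega>\<in>space M. \<xi> x \<omega> \<in> B} = P.prob {\<omega>\<in>space M. \<xi> 0 \<omega> \<in> B}"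
    if "B \<in> sets borel" for x B
  proof -
    have "P.prob {\<omega>\<in>space M. \<xi> x \<omega> \<in> B} = measure (distr M borel (\<xi> x)) B"
      using measure_distr[OF meas[of x] that] by (simp add: vimage_def Int_def conj_commute)
    also have "\<dots> = measure (distr M borel (\<xi> 0)) B" using dst[of x 0] by simp
    also have "\<dots> = P.prob {\<omega>\<in>space M. \<xi> 0 \<omega> \<in> B}"
      using measure_distr[OF meas[of 0] that] by (simp add: vimage_def Int_def conj_commute)
    finally show ?thesis .
  qed
  have evt: "{\<omega>\<in>space M. \<xi> x \<omega> \<in> B} \<in> sets M" if "B \<in> sets borel" for x B
  proof -
    have "{\<omega>\<in>space M. \<xi> x \<omega> \<in> B} = \<xi> x -` B \<inter> space M" by auto
    then show ?thesis using measurable_sets[OF meas[of x] that] by simp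
  qed
  obtain Kf where Kf: "\<And>y. (1 + norm y) ^ 0 * \<bar>f y\<bar> \<le> Kf" using schwartz_decay[OF sf] by blast
  have Kf': "\<bar>f y\<bar> \<le> Kf" for y using Kf[of y] by simp
  have fcont: "continuous_on UNIV f"
  proof (rule continuous_at_imp_continuous_on, intro ballI)
    fix y
    have "iter_partial [] f differentiable (at y)" using sf unfolding schwartz_def by blast
    then show "isCont f y" by (simp add: differentiable_imp_continuous_within)
  qed
  have fmeas[measurable]: "f \<in> borel_measurable borel" by (rule borel_measurable_continuous_onI[OF fcont])
  define e where "e = from_nat_into (UNIV :: (int^'n) set)"
  have infU: "infinite (UNIV :: (int^'n) set)"
  proof -
    have "inj (\<lambda>k::nat. (vec (int k) :: int^'n))" by (auto simp: inj_on_def vec_eq_iff)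
    then have "infinite (range (\<lambda>k::nat. (vec (int k) :: int^'n)))" by (rule range_inj_infinite)
    then show ?thesis by (rule infinite_super[rotated]) simp
  qed
  have bije: "bij e" unfolding e_def bij_def
    using bij_betw_from_nat_into[OF countableI_type infU] by (simp add: bij_betw_def)
  have inje: "inj e" using bije bij_is_inj by auto
  define d where "d = CARD('n)"
  define s where "s = \<rho> / (4 * real d)"
  have s0: "s > 0" using rho0 by (simp add: s_def d_def)
  define C0 where "C0 = (s/2) ^ d * \<pi> * (\<gamma>/2)^2"
  have C0: "C0 > 0" using s0 \<pi>0 g0 by (simp add: C0_def)
  obtain R2 where R2: "\<And>r. r \<ge> R2 \<Longrightarrow> h r < 1"
  proof -
    have "eventually (\<lambda>r. h r < 1) at_top" using order_tendstoD(2)[OF assms(9)] by simp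
    then show ?thesis using that by (auto simp: eventually_at_top_linorder)
  qed
  define r0 where "r0 = max (max 1 R2) (max (2*(norm a + norm b + 2*\<delta>)/\<rho> + 1) (2/s + 1))"
  have keyr: "prob_space.variance M (\<lambda>\<omega>. \<Sum>\<^sub>\<infinity>x\<in>UNIV. f ((1 / r) *\<^sub>R (lat x + \<xi> x \<omega>)))
             \<ge> C0 * r powr (real CARD('n) - 2)" if rr: "r > r0" for r
  proof -
    have r1: "r > 0" "r \<ge> R2" using rr by (auto simp: r0_def)
    have hr: "(norm a + norm b + 2*\<delta>)/r < \<rho>/2"
    proof -
      have "r > 2*(norm a + norm b + 2*\<delta>)/\<rho>" using rr by (simp add: r0_def)
      then have "r * \<rho> > 2*(norm a + norm b + 2*\<delta>)" using rho0 by (simp add: field_simps)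
      then show ?thesis using r1 rho0 by (simp add: field_simps)
    qed
    have rs: "r * s \<ge> 2"
    proof -
      have "r > 2/s" using rr by (simp add: r0_def)
      then show ?thesis using s0 by (simp add: field_simps)
    qed
    define Y where "Y x \<omega> = f ((1/r) *\<^sub>R (lat x + \<xi> x \<omega>))" for x \<omega>
    have gmeas[measurable]: "(\<lambda>y. f ((1/r) *\<^sub>R (lat x + y))) \<in> borel_measurable borel" for x
      by measurable
    have indY: "P.indep_vars (\<lambda>_. borel) Y UNIV"
      unfolding Y_def by (rule P.indep_vars_compose2[OF ind, where Y="\<lambda>x y. f ((1/r) *\<^sub>R (lat x + y))"]) simp
    have bndY: "\<bar>Y x \<omega>\<bar> \<le> Kf" for x \<omega> unfolding Y_def by (rule Kf')
    obtain L where L: "\<And>y F. finite F \<Longrightarrow> (\<Sum>x\<in>F. \<bar>f ((1/r) *\<^sub>R (lat x + y))\<bar>) \<le> L"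
      using lattice_bound[OF sf r1(1)] by blast
    define P0 where "P0 = distr M borel (\<xi> 0)"
    interpret P0: prob_space P0 unfolding P0_def by (rule P.prob_space_distr) simp
    have EY: "P.expectation (\<lambda>\<omega>. \<bar>Y x \<omega>\<bar>) = P0.expectation (\<lambda>y. \<bar>f ((1/r) *\<^sub>R (lat x + y))\<bar>)" for x
    proof -
      have "P0.expectation (\<lambda>y. \<bar>f ((1/r) *\<^sub>R (lat x + y))\<bar>) = integral\<^sup>L (distr M borel (\<xi> x)) (\<lambda>y. \<bar>f ((1/r) *\<^sub>R (lat x + y))\<bar>)"
        unfolding P0_def using dst[of 0 x] by simp
      also have "\<dots> = P.expectation (\<lambda>\<omega>. \<bar>Y x \<omega>\<bar>)" unfolding Y_def
        by (rule integral_distr) simp_all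
      finally show ?thesis by simp
    qed
    have sumE: "(\<Sum>k<n. P.expectation (\<lambda>\<omega>. \<bar>Y (e k) \<omega>\<bar>)) \<le> L" for n
    proof -
      have intg: "integrable P0 (\<lambda>y. \<bar>f ((1/r) *\<^sub>R (lat x + y))\<bar>)" for x
        by (rule P0.bnd_integrable[where K=Kf]) (simp_all add: P0_def Kf')
      have "(\<Sum>k<n. P.expectation (\<lambda>\<omega>. \<bar>Y (e k) \<omega>\<bar>)) = (\<Sum>k<n. P0.expectation (\<lambda>y. \<bar>f ((1/r) *\<^sub>R (lat (e k) + y))\<bar>))"
        by (simp add: EY)
      also have "\<dots> = P0.expectation (\<lambda>y. \<Sum>k<n. \<bar>f ((1/r) *\<^sub>R (lat (e k) + y))\<bar>)"
        by (rule Bochner_Integration.integral_sum[symmetric]) (rule intg)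
      also have "\<dots> \<le> L"
      proof (rule P0.integral_le_const)
        show "integrable P0 (\<lambda>y. \<Sum>k<n. \<bar>f ((1/r) *\<^sub>R (lat (e k) + y))\<bar>)" using intg by simp
        show "AE y in P0. (\<Sum>k<n. \<bar>f ((1/r) *\<^sub>R (lat (e k) + y))\<bar>) \<le> L"
        proof (rule AE_I2)
          fix y
          have "(\<Sum>k<n. \<bar>f ((1/r) *\<^sub>R (lat (e k) + y))\<bar>) = (\<Sum>x\<in>e ` {..<n}. \<bar>f ((1/r) *\<^sub>R (lat x + y))\<bar>)"
            by (simp add: sum.reindex inj_on_subset[OF inje])
          also have "\<dots> \<le> L" by (rule L) simp
          finally show "(\<Sum>k<n. \<bar>f ((1/r) *\<^sub>R (lat (e k) + y))\<bar>) \<le> L" .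
        qed
      qed
      finally show ?thesis .
    qed
    obtain F where F: "finite F" "\<forall>x\<in>F. dist ((1/r) *\<^sub>R lat x) z0 < \<rho>/2"
      and cardF: "real (card F) \<ge> (r * s / 2) ^ d"
      using lattice_count[OF rho0 r1(1), of z0] rs unfolding s_def d_def by auto
    have main: "P.variance (\<lambda>\<omega>. infsum (\<lambda>x. Y x \<omega>) UNIV) \<ge> (\<Sum>x\<in>F. P.variance (Y x))"
      by (rule P.main_var_bound[OF bije indY _ sumE F(1)]) (rule bndY)
    have varx: "P.variance (Y x) \<ge> \<pi> * (\<gamma>/(2*r))^2" if xF: "x \<in> F" for x
    proof -
      define g where "g u = f ((1/r) *\<^sub>R (lat x + u))" for u
      have sepx: "g u - g v \<ge> \<gamma>/r" if "dist u a < \<delta>" "dist v b < \<delta>" for u v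
        unfolding g_def by (rule mvt_sep[OF sf r1(1) sep _ hr that]) (use xF F in auto)
      define I0 where "I0 = Inf (g ` ball a \<delta>)"
      have ne: "ball a \<delta> \<noteq> {}" using d0 by simp
      have bdd: "bdd_below (g ` ball a \<delta>)"
      proof
        fix y assume "y \<in> g ` ball a \<delta>"
        then obtain u where "u \<in> ball a \<delta>" "y = g u" by blast
        then show "g b + \<gamma>/r \<le> y" using sepx[of u b] d0 by (simp add: dist_commute)
      qed
      have lo: "g u \<ge> I0" if "dist u a < \<delta>" for u
        unfolding I0_def by (rule cInf_lower[OF _ bdd]) (use that in \<open>auto simp: dist_commute\<close>)
      have hi: "g v + \<gamma>/r \<le> I0" if "dist v b < \<delta>" for v
        unfolding I0_def
      proof (rule cInf_greatest)
        show "g ` ball a \<delta> \<noteq> {}" using ne by simp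
        fix y assume "y \<in> g ` ball a \<delta>"
        then obtain u where "u \<in> ball a \<delta>" "y = g u" by blast
        then show "g v + \<gamma>/r \<le> y" using sepx[of u v] that by (simp add: dist_commute)
      qed
      define A1 where "A1 = {\<omega>\<in>space M. \<xi> x \<omega> \<in> ball a \<delta>}"
      define A2 where "A2 = {\<omega>\<in>space M. \<xi> x \<omega> \<in> ball b \<delta>}"
      have "P.variance (Y x) \<ge> \<pi> * (\<gamma>/(2*r))^2"
      proof (rule P.variance_sep[where K=Kf and ?A1.0=A1 and ?A2.0=A2 and \<theta>="I0 - \<gamma>/(2*r)"])
        show "Y x \<in> borel_measurable M" unfolding Y_def by measurable
        show "\<bar>Y x \<omega>\<bar> \<le> Kf" for \<omega> by (rule bndY)
        show "A1 \<in> P.events" unfolding A1_def by (rule evt) simp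
        show "A2 \<in> P.events" unfolding A2_def by (rule evt) simp
        show "P.prob A1 \<ge> \<pi>" unfolding A1_def using probx[of "ball a \<delta>" x] by (simp add: \<pi>_def \<pi>1_def)
        show "P.prob A2 \<ge> \<pi>" unfolding A2_def using probx[of "ball b \<delta>" x] by (simp add: \<pi>_def \<pi>2_def)
        show "Y x \<omega> \<ge> I0 - \<gamma>/(2*r) + \<gamma>/(2*r)" if "\<omega> \<in> A1" for \<omega>
          using lo[of "\<xi> x \<omega>"] that unfolding A1_def Y_def g_def by (simp add: dist_commute)
        show "Y x \<omega> \<le> I0 - \<gamma>/(2*r) - \<gamma>/(2*r)" if "\<omega> \<in> A2" for \<omega>
          using hi[of "\<xi> x \<omega>"] that unfolding A2_def Y_def g_def by (simp add: dist_commute)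
        show "\<gamma>/(2*r) \<ge> 0" using g0 r1 by simp
      qed
      then show ?thesis .
    qed
    have "(\<Sum>x\<in>F. P.variance (Y x)) \<ge> (\<Sum>x\<in>F. \<pi> * (\<gamma>/(2*r))^2)"
      by (rule sum_mono) (rule varx)
    moreover have "(\<Sum>x\<in>F. \<pi> * (\<gamma>/(2*r))^2) = real (card F) * (\<pi> * (\<gamma>/(2*r))^2)" by simp
    moreover have "real (card F) * (\<pi> * (\<gamma>/(2*r))^2) \<ge> (r * s / 2) ^ d * (\<pi> * (\<gamma>/(2*r))^2)"
      using cardF \<pi>0 by (intro mult_right_mono) auto
    moreover have "(r * s / 2) ^ d * (\<pi> * (\<gamma>/(2*r))^2) = C0 * (r ^ d / r^2)"
      using r1 by (simp add: C0_def power_mult_distrib power_divide field_simps)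
    moreover have "C0 * r powr (real CARD('n) - 2) = C0 * (r ^ d / r^2)"
      using r1 by (simp add: powr_diff powr_realpow d_def)
    moreover have "P.variance (\<lambda>\<omega>. infsum (\<lambda>x. Y x \<omega>) UNIV) = prob_space.variance M (\<lambda>\<omega>. \<Sum>\<^sub>\<infinity>x\<in>UNIV. f ((1 / r) *\<^sub>R (lat x + \<xi> x \<omega>)))"
      unfolding Y_def ..
    ultimately show ?thesis using main by linarith
  qed
  show ?thesis
  proof (intro exI conjI allI impI)
    show "C0 > 0" by (rule C0)
    show "r0 > 0" by (simp add: r0_def)
    fix r assume rr: "r > r0"
    have r1: "r > 0" "r \<ge> R2" using rr by (auto simp: r0_def)
    have "h r \<le> 1" using R2[OF r1(2)] by simp
    moreover have "h r > 0" using assms(8) r1 by simp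
    moreover have "C0 * r powr (real CARD('n) - 2) \<ge> 0" using C0 by simp
    ultimately have "C0 * r powr (real CARD('n) - 2) * h r \<le> C0 * r powr (real CARD('n) - 2)"
      by (simp add: mult_left_le)
    then show "C0 * r powr (real CARD('n) - 2) * h r \<le> prob_space.variance M (\<lambda>\<omega>. \<Sum>\<^sub>\<infinity>x\<in>UNIV. f ((1 / r) *\<^sub>R (lat x + \<xi> x \<omega>)))"
      using keyr[OF rr] by linarith
  qed
qed

end
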